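(* For every integer $n\geq 7$ there exist trees $T_1$ and $T_2$ on $n$ vertices such that $\psi(T_1)=\psi(T_2)$ but $T_1$ and $T_2$ are not isomorphic.
   Context: All graphs are finite, simple and nonempty. For a graph $G$ and a positive integer $k$, a $k$-path vertex cover ($k$-PVC) of $G$ is a set $S$ of vertices such that every path on $k$ vertices in $G$ contains at least one vertex of $S$ (if $G$ has no path on $k$ vertices, the empty set is a $k$-PVC). $\psi_k(G)$ denotes the minimum cardinality of a $k$-PVC of $G$. For a graph $G$ on $n$ vertices, the path sequence of $G$ is $\psi(G)=(\psi_1(G),\psi_2(G),\ldots,\psi_n(G))$. *)

theory Defs
  imports Main
begin

definition simple_graph :: "'a set \<Rightarrow> 'a set set \<Rightarrow> bool" where
  "simple_graph V E \<longleftrightarrow> finite V \<and> V \<noteq> {} \<and> (\<forall>e\<in>E. e \<subseteq> V \<and> card e = 2)"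

definition adj :: "'a set set \<Rightarrow> 'a \<Rightarrow> 'a \<Rightarrow> bool" where
  "adj E u v \<longleftrightarrow> {u, v} \<in> E"

text \<open>A path in G given by its vertex sequence: distinct vertices of V, consecutive ones adjacent.
  The number of vertices of the path is the length of the list.\<close>
definition is_path :: "'a set \<Rightarrow> 'a set set \<Rightarrow> 'a list \<Rightarrow> bool" where
  "is_path V E xs \<longleftrightarrow> xs \<noteq> [] \<and> distinct xs \<and> set xs \<subseteq> V \<and>
     (\<forall>i. Suc i < length xs \<longrightarrow> adj E (xs ! i) (xs ! Suc i))"

definition connected_graph :: "'a set \<Rightarrow> 'a set set \<Rightarrow> bool" where
  "connected_graph V E \<longleftrightarrow> (\<forall>u\<in>V. \<forall>v\<in>V. \<exists>xs. is_path V E xs \<and> hd xs = u \<and> last xs = v)"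

definition has_cycle :: "'a set \<Rightarrow> 'a set set \<Rightarrow> bool" where
  "has_cycle V E \<longleftrightarrow> (\<exists>xs. is_path V E xs \<and> length xs \<ge> 3 \<and> adj E (last xs) (hd xs))"

definition is_tree :: "'a set \<Rightarrow> 'a set set \<Rightarrow> bool" where
  "is_tree V E \<longleftrightarrow> simple_graph V E \<and> connected_graph V E \<and> \<not> has_cycle V E"

definition is_kPVC :: "'a set \<Rightarrow> 'a set set \<Rightarrow> nat \<Rightarrow> 'a set \<Rightarrow> bool" where
  "is_kPVC V E k S \<longleftrightarrow> S \<subseteq> V \<and>
     (\<forall>xs. is_path V E xs \<and> length xs = k \<longrightarrow> set xs \<inter> S \<noteq> {})"

definition psi :: "'a set \<Rightarrow> 'a set set \<Rightarrow> nat \<Rightarrow> nat" where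
  "psi V E k = Min {card S | S. is_kPVC V E k S}"

definition path_sequence :: "'a set \<Rightarrow> 'a set set \<Rightarrow> nat list" where
  "path_sequence V E = map (psi V E) [1..<card V + 1]"

definition graph_iso :: "'a set \<Rightarrow> 'a set set \<Rightarrow> 'b set \<Rightarrow> 'b set set \<Rightarrow> bool" where
  "graph_iso V1 E1 V2 E2 \<longleftrightarrow> (\<exists>f. bij_betw f V1 V2 \<and>
     (\<forall>u\<in>V1. \<forall>v\<in>V1. adj E1 u v \<longleftrightarrow> adj E2 (f u) (f v)))"

end

theory Submission
  imports Defs
begin


lemma adj_sym: "adj E u v = adj E v u" by (simp add: adj_def insert_commute)

fun wk :: "'a set set \<Rightarrow> 'a list \<Rightarrow> bool" where
  "wk E [] = True" | "wk E [x] = True" | "wk E (x#y#xs) = (adj E x y \<and> wk E (y#xs))"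

lemma wk_nth: "wk E xs \<longleftrightarrow> (\<forall>i. Suc i < length xs \<longrightarrow> adj E (xs!i) (xs!Suc i))"
proof (induction E xs rule: wk.induct)
  case (3 E x y xs)
  show ?case
  proof
    assume "wk E (x#y#xs)"
    then show "\<forall>i. Suc i < length (x#y#xs) \<longrightarrow> adj E ((x#y#xs)!i) ((x#y#xs)!Suc i)"
      using 3 by (auto split: nat.split simp: nth_Cons)
  next
    assume h: "\<forall>i. Suc i < length (x#y#xs) \<longrightarrow> adj E ((x#y#xs)!i) ((x#y#xs)!Suc i)"
    have "adj E x y" using h[rule_format, of 0] by simp
    moreover have "\<forall>i. Suc i < length (y#xs) \<longrightarrow> adj E ((y#xs)!i) ((y#xs)!Suc i)"
      using h by (metis Suc_less_eq length_Cons nth_Cons_Suc)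
    ultimately show "wk E (x#y#xs)" using 3 by simp
  qed
qed auto

lemma wk_append: "wk E (xs @ y # ys) \<longleftrightarrow> wk E (xs @ [y]) \<and> wk E (y # ys)"
proof (induction xs)
  case (Cons x xs) then show ?case by (cases xs) auto
qed simp

lemma wk_rev: "wk E (rev xs) = wk E xs"
proof (induction E xs rule: wk.induct)
  case (3 E x y xs)
  have "wk E (rev (x#y#xs)) = wk E (rev xs @ y # [x])" by simp
  also have "\<dots> = (wk E (rev xs @ [y]) \<and> wk E [y, x])" by (rule wk_append)
  also have "\<dots> = (wk E (y#xs) \<and> adj E x y)" using 3 by (simp add: adj_sym)
  finally show ?case by auto
qed auto

lemma wk_path: "wk E xs \<Longrightarrow> xs \<noteq> [] \<Longrightarrow> set xs \<subseteq> V \<Longrightarrow>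
   \<exists>ys. is_path V E ys \<and> hd ys = hd xs \<and> last ys = last xs"
proof (induction "length xs" arbitrary: xs rule: less_induct)
  case less
  show ?case
  proof (cases "distinct xs")
    case True
    have "is_path V E xs" using True less.prems unfolding is_path_def wk_nth by blast
    thus ?thesis by blast
  next
    case False
    then obtain a x b c where xs: "xs = a @ [x] @ b @ [x] @ c" using not_distinct_decomp by blast
    have w: "wk E (a @ x # (b @ x # c))" using less.prems(1) xs by simp
    have w12: "wk E (a @ [x]) \<and> wk E (x # (b @ x # c))"
      using w wk_append[of E a x "b @ x # c"] by blast
    have w2: "wk E ((x # b) @ x # c)" using w12 by simp
    have "wk E (x # c)" using w2 wk_append[of E "x#b" x c] by blast
    hence wy: "wk E (a @ x # c)" using w12 wk_append[of E a x c] by blast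
    have lenlt: "length (a @ x # c) < length xs" using xs by simp
    have sub: "set (a @ x # c) \<subseteq> V" using less.prems(3) xs by auto
    have "\<exists>ys. is_path V E ys \<and> hd ys = hd (a @ x # c) \<and> last ys = last (a @ x # c)"
      by (rule less.hyps[OF lenlt wy _ sub]) simp
    then obtain ys where ys: "is_path V E ys" "hd ys = hd (a @ x # c)" "last ys = last (a @ x # c)"
      by blast
    have h1: "hd (a @ x # c) = hd xs" using xs by (cases a) auto
    have h2: "last (a @ x # c) = last xs" using xs by (cases c) auto
    show ?thesis using ys h1 h2 by auto
  qed
qed

lemma conn_root:
  assumes "r \<in> V" "\<forall>u\<in>V. \<exists>p. wk E (p @ [r]) \<and> hd (p@[r]) = u \<and> set p \<subseteq> V"
  shows "connected_graph V E"
  unfolding connected_graph_def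
proof (intro ballI)
  fix u v assume uv: "u \<in> V" "v \<in> V"
  obtain pu where pu: "wk E (pu @ [r])" "hd (pu@[r]) = u" "set pu \<subseteq> V" using assms(2) uv by blast
  obtain pv where pv: "wk E (pv @ [r])" "hd (pv@[r]) = v" "set pv \<subseteq> V" using assms(2) uv by blast
  let ?xs = "pu @ r # rev pv"
  have "wk E (r # rev pv)" using pv(1) wk_rev[of E "pv @ [r]"] by simp
  hence "wk E ?xs" using pu(1) wk_append[of E pu r "rev pv"] by blast
  moreover have "hd ?xs = u" using pu(2) by (cases pu) auto
  moreover have "last ?xs = v"
  proof -
    have "last ?xs = last (rev (pv @ [r]))" by simp
    also have "\<dots> = hd (pv @ [r])" by (simp add: last_rev)
    finally show ?thesis using pv(2) by simp
  qed
  moreover have "set ?xs \<subseteq> V" using pu(3) pv(3) assms(1) by auto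
  ultimately have "\<exists>ys. is_path V E ys \<and> hd ys = hd ?xs \<and> last ys = last ?xs"
    by (intro wk_path) auto
  thus "\<exists>xs. is_path V E xs \<and> hd xs = u \<and> last xs = v"
    using \<open>hd ?xs = u\<close> \<open>last ?xs = v\<close> by auto
qed

lemma no_cycle:
  fixes V :: "nat set"
  assumes Q: "\<And>u w v. adj E u v \<Longrightarrow> adj E w v \<Longrightarrow> u < v \<Longrightarrow> w < v \<Longrightarrow> u = w"
  shows "\<not> has_cycle V E"
proof
  assume "has_cycle V E"
  then obtain xs where p: "is_path V E xs" and L: "length xs \<ge> 3" and lh: "adj E (last xs) (hd xs)"
    unfolding has_cycle_def by blast
  let ?L = "length xs"
  have ne: "xs \<noteq> []" and d: "distinct xs" and ad: "\<And>i. Suc i < ?L \<Longrightarrow> adj E (xs!i) (xs!Suc i)"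
    using p unfolding is_path_def by auto
  have lh': "adj E (xs!(?L-1)) (xs!0)" using lh ne by (simp add: last_conv_nth hd_conv_nth)
  define m where "m = Max (set xs)"
  have "m \<in> set xs" using ne unfolding m_def by simp
  then obtain i where i: "i < ?L" "xs!i = m" by (auto simp: in_set_conv_nth)
  have mx: "\<And>j. j < ?L \<Longrightarrow> xs!j \<le> m" unfolding m_def by simp
  obtain a b where ab: "a < ?L" "b < ?L" "a \<noteq> i" "b \<noteq> i" "a \<noteq> b"
     "adj E (xs!a) (xs!i)" "adj E (xs!i) (xs!b)"
  proof (cases "i = 0")
    case True
    have "adj E (xs!0) (xs!Suc 0)" by (rule ad) (use L in simp)
    thus ?thesis using True L lh' by (intro that[of "?L-1" 1]) auto
  next
    case False
    show ?thesis
    proof (cases "i = ?L - 1")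
      case True
      have e: "Suc (?L-2) = i" using True L by simp
      have "adj E (xs!(?L-2)) (xs!Suc(?L-2))" by (rule ad) (use L in simp)
      hence "adj E (xs!(?L-2)) (xs!i)" by (simp only: e)
      thus ?thesis using True L lh' by (intro that[of "?L-2" 0]) auto
    next
      case F2: False
      have e: "Suc (i-1) = i" using False by simp
      have "adj E (xs!(i-1)) (xs!Suc(i-1))" by (rule ad) (use i False in simp)
      hence 1: "adj E (xs!(i-1)) (xs!i)" by (simp only: e)
      have 2: "adj E (xs!i) (xs!Suc i)" by (rule ad) (use i F2 in simp)
      show ?thesis using 1 2 i F2 False by (intro that[of "i-1" "Suc i"]) auto
    qed
  qed
  have na: "xs!a \<noteq> xs!i" using ab(1,3) i(1) d by (simp add: nth_eq_iff_index_eq)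
  have nb: "xs!b \<noteq> xs!i" using ab(2,4) i(1) d by (simp add: nth_eq_iff_index_eq)
  have nab: "xs!a \<noteq> xs!b" using ab(1,2,5) d by (simp add: nth_eq_iff_index_eq)
  have la: "xs!a < xs!i" using na mx[OF ab(1)] i(2) by simp
  have lb: "xs!b < xs!i" using nb mx[OF ab(2)] i(2) by simp
  have "adj E (xs!b) (xs!i)" using ab(7) by (simp add: adj_sym)
  have "xs!a = xs!b" by (rule Q[OF ab(6) \<open>adj E (xs!b) (xs!i)\<close> la lb])
  thus False using nab by simp
qed

lemma kPVC_V: "is_kPVC V E k V"
  unfolding is_kPVC_def is_path_def by (auto simp: Int_absorb2)

lemma fin_cards: assumes f: "finite V" shows "finite {card S | S. is_kPVC V E k S}"
proof -
  have "{card S | S. is_kPVC V E k S} \<subseteq> {..card V}"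
  proof (rule subsetI)
    fix x assume "x \<in> {card S | S. is_kPVC V E k S}"
    then obtain S where "x = card S" "S \<subseteq> V" unfolding is_kPVC_def by blast
    thus "x \<in> {..card V}" using card_mono[OF f] by auto
  qed
  thus ?thesis using finite_subset finite_atMost by blast
qed

lemma psi_le: assumes "finite V" "is_kPVC V E k S" shows "psi V E k \<le> card S"
proof -
  have "card S \<in> {card S | S. is_kPVC V E k S}" using assms(2) by blast
  thus ?thesis unfolding psi_def by (rule Min_le[OF fin_cards[OF assms(1)]])
qed

lemma psi_ge: assumes "finite V" "\<And>S. is_kPVC V E k S \<Longrightarrow> m \<le> card S"
  shows "m \<le> psi V E k"
proof -
  have ne: "{card S | S. is_kPVC V E k S} \<noteq> {}" using kPVC_V[of V E k] by blast
  have "psi V E k \<in> {card S | S. is_kPVC V E k S}"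
    unfolding psi_def by (rule Min_in[OF fin_cards[OF assms(1)] ne])
  then obtain S where "psi V E k = card S" "is_kPVC V E k S" by blast
  thus ?thesis using assms(2) by simp
qed

lemma psi_eq0: assumes "finite V" "\<And>xs. is_path V E xs \<Longrightarrow> length xs \<noteq> k" shows "psi V E k = 0"
proof -
  have "is_kPVC V E k {}" unfolding is_kPVC_def using assms(2) by blast
  from psi_le[OF assms(1) this] show ?thesis by simp
qed

lemma psi_1: assumes "finite V" shows "psi V E 1 = card V"
proof (rule antisym)
  show "psi V E 1 \<le> card V" using psi_le[OF assms kPVC_V] .
  show "card V \<le> psi V E 1"
  proof (rule psi_ge[OF assms])
    fix S assume S: "is_kPVC V E 1 S"
    have "V \<subseteq> S"
    proof
      fix v assume "v \<in> V"
      hence "is_path V E [v]" by (simp add: is_path_def)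
      moreover have "\<And>xs. is_path V E xs \<Longrightarrow> length xs = 1 \<Longrightarrow> set xs \<inter> S \<noteq> {}"
        using S unfolding is_kPVC_def by blast
      ultimately show "v \<in> S" by fastforce
    qed
    moreover have "S \<subseteq> V" using S unfolding is_kPVC_def by blast
    ultimately show "card V \<le> card S" by simp
  qed
qed

lemma psi_2paths:
  assumes "finite V" "is_path V E p" "is_path V E q" "length p = k" "length q = k"
    "set p \<inter> set q = {}"
  shows "2 \<le> psi V E k"
proof (rule psi_ge[OF assms(1)])
  fix S assume S: "is_kPVC V E k S"
  have hit: "\<And>xs. is_path V E xs \<Longrightarrow> length xs = k \<Longrightarrow> set xs \<inter> S \<noteq> {}"
    using S unfolding is_kPVC_def by blast
  obtain a where a: "a \<in> set p" "a \<in> S" using hit[OF assms(2,4)] by blast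
  obtain b where b: "b \<in> set q" "b \<in> S" using hit[OF assms(3,5)] by blast
  have "a \<noteq> b" using a b assms(6) by blast
  moreover have "S \<subseteq> V" using S unfolding is_kPVC_def by blast
  hence fS: "finite S" using finite_subset assms(1) by blast
  have "{a,b} \<subseteq> S" using a b by blast
  hence "card {a,b} \<le> card S" by (rule card_mono[OF fS])
  thus "2 \<le> card S" using \<open>a \<noteq> b\<close> by simp
qed

lemma psi_1path:
  assumes "finite V" "is_path V E p" "length p = k"
  shows "1 \<le> psi V E k"
proof (rule psi_ge[OF assms(1)])
  fix S assume S: "is_kPVC V E k S"
  have hit: "\<And>xs. is_path V E xs \<Longrightarrow> length xs = k \<Longrightarrow> set xs \<inter> S \<noteq> {}"
    using S unfolding is_kPVC_def by blast
  obtain a where a: "a \<in> S" using hit[OF assms(2,3)] by blast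
  have "S \<subseteq> V" using S unfolding is_kPVC_def by blast
  hence fS: "finite S" using finite_subset assms(1) by blast
  have "card S \<noteq> 0" using a fS by auto
  thus "1 \<le> card S" by linarith
qed



lemma is_path_wk: "is_path V E xs \<longleftrightarrow> xs \<noteq> [] \<and> distinct xs \<and> set xs \<subseteq> V \<and> wk E xs"
  by (simp add: is_path_def wk_nth)

lemma seq_values:
  fixes E :: "nat set set" and n k :: nat
  assumes n7: "n \<ge> 7"
  and cov: "\<And>u v. adj E u v \<Longrightarrow> u = 0 \<or> u = 2 \<or> v = 0 \<or> v = 2"
  and HA: "\<And>u v. adj E u v \<Longrightarrow> u \<noteq> 1 \<Longrightarrow> v \<noteq> 1 \<Longrightarrow> ((u = 0 \<or> u = 2) \<longleftrightarrow> \<not>(v = 0 \<or> v = 2))"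
  and HB: "\<And>u w y. adj E u y \<Longrightarrow> adj E w y \<Longrightarrow> (u = 0 \<or> u = 2) \<Longrightarrow> (w = 0 \<or> w = 2) \<Longrightarrow> y \<noteq> 1 \<Longrightarrow> u = w"
  and HC: "\<And>v. adj E 1 v \<Longrightarrow> v = 0 \<or> v = 2"
  and e01: "adj E 0 1" and e12: "adj E 1 2" and e23: "adj E 2 3" and e05: "adj E 0 5" and e06: "adj E 0 6"
  and k: "1 \<le> k" "k \<le> n"
  shows "psi {..<n} E k = (if k = 1 then n else if k \<le> 3 then 2 else if k \<le> 5 then 1 else 0)"
proof -
  let ?V = "{..<n::nat}"
  have fV: "finite ?V" by simp
  have trip: False if x: "x = 0 \<or> x = 2" and xy: "adj E x y" and yz: "adj E y z" and xz: "x \<noteq> z"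
     and y1: "y \<noteq> 1" and z1: "z \<noteq> 1" for x y z
  proof -
    have x1: "x \<noteq> 1" using x by auto
    have ny: "\<not> (y = 0 \<or> y = 2)" using HA[OF xy x1 y1] x by blast
    have nz: "z = 0 \<or> z = 2" using HA[OF yz y1 z1] ny by blast
    have zy: "adj E z y" using yz adj_sym by metis
    have "x = z" by (rule HB[OF xy zy x nz y1])
    thus False using xz by simp
  qed
  have four: "1 \<in> set xs" if p: "is_path ?V E xs" and l: "4 \<le> length xs" for xs
  proof (rule ccontr)
    assume n1: "1 \<notin> set xs"
    have ad: "\<And>i. Suc i < length xs \<Longrightarrow> adj E (xs!i) (xs!Suc i)" using p unfolding is_path_def by blast
    have d: "distinct xs" using p unfolding is_path_def by blast
    have ne: "\<And>i. i < length xs \<Longrightarrow> xs!i \<noteq> 1" using n1 nth_mem by metis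
    have a01: "adj E (xs!0) (xs!1)" using ad[of 0] l by simp
    have a12: "adj E (xs!1) (xs!2)" using ad[of 1] l by (simp add: numeral_2_eq_2)
    have a23: "adj E (xs!2) (xs!3)" using ad[of 2] l by (simp add: numeral_3_eq_3 numeral_2_eq_2)
    have dd: "\<And>i j. i < length xs \<Longrightarrow> j < length xs \<Longrightarrow> i \<noteq> j \<Longrightarrow> xs!i \<noteq> xs!j"
      using d by (simp add: nth_eq_iff_index_eq)
    have d02: "xs!0 \<noteq> xs!2" using dd[of 0 2] l by fastforce
    have d13: "xs!1 \<noteq> xs!3" using dd[of 1 3] l by fastforce
    have n0: "xs!0 \<noteq> 1" "xs!1 \<noteq> 1" "xs!2 \<noteq> 1" "xs!3 \<noteq> 1" 
      using ne[of 0] ne[of 1] ne[of 2] ne[of 3] l by (simp_all del: length_greater_0_conv)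
    show False
    proof (cases "xs!0 = 0 \<or> xs!0 = 2")
      case True show False by (rule trip[OF True a01 a12 d02 n0(2,3)])
    next
      case False
      hence c: "xs!1 = 0 \<or> xs!1 = 2" using HA[OF a01 n0(1,2)] by blast
      show False using trip[OF c a12 a23 d13 n0(3,4)] .
    qed
  qed
  have six: False if p: "is_path ?V E xs" and l: "6 \<le> length xs" for xs
  proof -
    have ad: "\<And>i. Suc i < length xs \<Longrightarrow> adj E (xs!i) (xs!Suc i)" using p unfolding is_path_def by blast
    have adr: "\<And>i. Suc i < length xs \<Longrightarrow> adj E (xs!Suc i) (xs!i)" using ad adj_sym by metis
    have d: "distinct xs" using p unfolding is_path_def by blast
    have dd: "\<And>i j. i < length xs \<Longrightarrow> j < length xs \<Longrightarrow> i \<noteq> j \<Longrightarrow> xs!i \<noteq> xs!j"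
      using d by (simp add: nth_eq_iff_index_eq)
    have "1 \<in> set xs" using four[OF p] l by simp
    then obtain i where i: "i < length xs" "xs!i = 1" by (auto simp: in_set_conv_nth)
    show False
    proof (cases "i \<le> 2")
      case True
      have a0: "adj E 1 (xs!Suc i)" using ad[of i] i True l by simp
      have c: "xs!Suc i = 0 \<or> xs!Suc i = 2" using HC[OF a0] .
      have a1: "adj E (xs!Suc i) (xs!Suc (Suc i))" using ad[of "Suc i"] True l by simp
      have a2: "adj E (xs!Suc (Suc i)) (xs!Suc (Suc (Suc i)))" using ad[of "Suc (Suc i)"] True l by simp
      have dz: "xs!Suc i \<noteq> xs!Suc (Suc (Suc i))" using dd[of "Suc i" "Suc (Suc (Suc i))"] True l by simp
      have y1: "xs!Suc (Suc i) \<noteq> 1" using dd[of "Suc (Suc i)" i] True l i by simp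
      have z1: "xs!Suc (Suc (Suc i)) \<noteq> 1" using dd[of "Suc (Suc (Suc i))" i] True l i by simp
      show False using trip[OF c a1 a2 dz y1 z1] .
    next
      case False
      then obtain j where j: "i = Suc (Suc (Suc j))" by (metis Suc_diff_Suc le_add_diff_inverse2 nat_le_linear add_2_eq_Suc' numeral_2_eq_2 not_less_eq_eq Suc_pred' less_Suc_eq_0_disj)
      have a0: "adj E 1 (xs!Suc (Suc j))" using adr[of "Suc (Suc j)"] i j by simp
      have c: "xs!Suc (Suc j) = 0 \<or> xs!Suc (Suc j) = 2" using HC[OF a0] .
      have a1: "adj E (xs!Suc (Suc j)) (xs!Suc j)" using adr[of "Suc j"] i j by simp
      have a2: "adj E (xs!Suc j) (xs!j)" using adr[of j] i j by simp
      have dz: "xs!Suc (Suc j) \<noteq> xs!j" using dd[of "Suc (Suc j)" j] i j by simp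
      have y1: "xs!Suc j \<noteq> 1" using dd[of "Suc j" i] i j by simp
      have z1: "xs!j \<noteq> 1" using dd[of j i] i j by simp
      show False using trip[OF c a1 a2 dz y1 z1] .
    qed
  qed
  have e50: "adj E 5 0" using e05 adj_sym by metis
  have sub: "{0, 2} \<subseteq> ?V" "{1} \<subseteq> ?V" using n7 by auto
  show ?thesis
  proof (cases "k = 1")
    case True thus ?thesis using psi_1[OF fV] by simp
  next
    case k1: False
    show ?thesis
    proof (cases "k \<le> 3")
      case True
      have cv: "is_kPVC ?V E k {0,2}"
        unfolding is_kPVC_def
      proof (intro conjI allI impI sub)
        fix xs assume h: "is_path ?V E xs \<and> length xs = k"
        have "adj E (xs!0) (xs!Suc 0)" using h k k1 unfolding is_path_def by simp
        moreover have "xs!0 \<in> set xs" "xs!Suc 0 \<in> set xs" using h k k1 by auto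
        ultimately show "set xs \<inter> {0, 2} \<noteq> {}" using cov by blast
      qed
      have le: "psi ?V E k \<le> 2" using psi_le[OF fV cv] by simp
      have ge: "2 \<le> psi ?V E k"
      proof (cases "k = 2")
        case True
        show ?thesis by (rule psi_2paths[OF fV, where p="[0,5]" and q="[2,3]"]) (use n7 True e05 e23 in \<open>auto simp: is_path_wk\<close>)
      next
        case False
        hence k3: "k = 3" using True k1 k by simp
        show ?thesis by (rule psi_2paths[OF fV, where p="[5,0,6]" and q="[1,2,3]"]) (use n7 k3 e50 e06 e12 e23 in \<open>auto simp: is_path_wk\<close>)
      qed
      show ?thesis using le ge True k1 by simp
    next
      case k3: False
      show ?thesis
      proof (cases "k \<le> 5")
        case True
        have cv: "is_kPVC ?V E k {1}"
          unfolding is_kPVC_def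
        proof (intro conjI allI impI sub)
          fix xs assume h: "is_path ?V E xs \<and> length xs = k"
          show "set xs \<inter> {1} \<noteq> {}" using four[of xs] h k3 by auto
        qed
        have le: "psi ?V E k \<le> 1" using psi_le[OF fV cv] by simp
        have ge: "1 \<le> psi ?V E k"
        proof (cases "k = 4")
          case True
          show ?thesis by (rule psi_1path[OF fV, where p="[5,0,1,2]"]) (use n7 True e50 e01 e12 in \<open>auto simp: is_path_wk\<close>)
        next
          case False
          hence k5: "k = 5" using True k3 by simp
          show ?thesis by (rule psi_1path[OF fV, where p="[5,0,1,2,3]"]) (use n7 k5 e50 e01 e12 e23 in \<open>auto simp: is_path_wk\<close>)
        qed
        show ?thesis using le ge True k1 k3 by simp
      next
        case False
        have "psi ?V E k = 0" by (rule psi_eq0[OF fV]) (use six False in force)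
        thus ?thesis using False k1 k3 by simp
      qed
    qed
  qed
qed



definition T1 :: "nat \<Rightarrow> nat set set" where
  "T1 n = {{0,1},{1,2},{2,3}} \<union> {{0,v} | v. 4 \<le> v \<and> v < n}"
definition T2 :: "nat \<Rightarrow> nat set set" where
  "T2 n = {{0,1},{1,2},{2,3},{2,4}} \<union> {{0,v} | v. 5 \<le> v \<and> v < n}"

lemma adj1: "adj (T1 n) u v \<longleftrightarrow> (u=0\<and>v=1) \<or> (u=1\<and>v=0) \<or> (u=1\<and>v=2) \<or> (u=2\<and>v=1) \<or>
   (u=2\<and>v=3) \<or> (u=3\<and>v=2) \<or> (u=0 \<and> 4\<le>v \<and> v<n) \<or> (v=0 \<and> 4\<le>u \<and> u<n)"
  unfolding adj_def T1_def by (auto simp: doubleton_eq_iff)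

lemma adj2: "adj (T2 n) u v \<longleftrightarrow> (u=0\<and>v=1) \<or> (u=1\<and>v=0) \<or> (u=1\<and>v=2) \<or> (u=2\<and>v=1) \<or>
   (u=2\<and>v=3) \<or> (u=3\<and>v=2) \<or> (u=2\<and>v=4) \<or> (u=4\<and>v=2) \<or> (u=0 \<and> 5\<le>v \<and> v<n) \<or> (v=0 \<and> 5\<le>u \<and> u<n)"
  unfolding adj_def T2_def by (auto simp: doubleton_eq_iff)

lemma tree1: assumes n7: "n \<ge> 7" shows "is_tree {..<n} (T1 n)"
  unfolding is_tree_def
proof (intro conjI)
  show "simple_graph {..<n} (T1 n)" unfolding simple_graph_def T1_def using n7 by (auto simp: lessThan_empty_iff)
  show "\<not> has_cycle {..<n} (T1 n)" by (rule no_cycle) (auto simp: adj1)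
  show "connected_graph {..<n} (T1 n)"
  proof (rule conn_root)
    show "0 \<in> {..<n}" using n7 by simp
    show "\<forall>u\<in>{..<n}. \<exists>p. wk (T1 n) (p @ [0]) \<and> hd (p @ [0]) = u \<and> set p \<subseteq> {..<n}"
    proof
      fix u assume u: "u \<in> {..<n}"
      consider "u = 0" | "u = 1" | "u = 2" | "u = 3" | "4 \<le> u" by linarith
      thus "\<exists>p. wk (T1 n) (p @ [0]) \<and> hd (p @ [0]) = u \<and> set p \<subseteq> {..<n}"
      proof cases
        case 1 thus ?thesis by (intro exI[of _ "[]"]) simp
      next
        case 2 thus ?thesis using n7 by (intro exI[of _ "[1]"]) (simp add: adj1)
      next
        case 3 thus ?thesis using n7 by (intro exI[of _ "[2,1]"]) (simp add: adj1)
      next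
        case 4 thus ?thesis using n7 by (intro exI[of _ "[3,2,1]"]) (simp add: adj1)
      next
        case 5 thus ?thesis using u by (intro exI[of _ "[u]"]) (simp add: adj1)
      qed
    qed
  qed
qed

lemma tree2: assumes n7: "n \<ge> 7" shows "is_tree {..<n} (T2 n)"
  unfolding is_tree_def
proof (intro conjI)
  show "simple_graph {..<n} (T2 n)" unfolding simple_graph_def T2_def using n7 by (auto simp: lessThan_empty_iff)
  show "\<not> has_cycle {..<n} (T2 n)" by (rule no_cycle) (auto simp: adj2)
  show "connected_graph {..<n} (T2 n)"
  proof (rule conn_root)
    show "0 \<in> {..<n}" using n7 by simp
    show "\<forall>u\<in>{..<n}. \<exists>p. wk (T2 n) (p @ [0]) \<and> hd (p @ [0]) = u \<and> set p \<subseteq> {..<n}"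
    proof
      fix u assume u: "u \<in> {..<n}"
      consider "u = 0" | "u = 1" | "u = 2" | "u = 3" | "u = 4" | "5 \<le> u" by linarith
      thus "\<exists>p. wk (T2 n) (p @ [0]) \<and> hd (p @ [0]) = u \<and> set p \<subseteq> {..<n}"
      proof cases
        case 1 thus ?thesis by (intro exI[of _ "[]"]) simp
      next
        case 2 thus ?thesis using n7 by (intro exI[of _ "[1]"]) (simp add: adj2)
      next
        case 3 thus ?thesis using n7 by (intro exI[of _ "[2,1]"]) (simp add: adj2)
      next
        case 4 thus ?thesis using n7 by (intro exI[of _ "[3,2,1]"]) (simp add: adj2)
      next
        case 5 thus ?thesis using n7 by (intro exI[of _ "[4,2,1]"]) (simp add: adj2)
      next
        case 6 thus ?thesis using u by (intro exI[of _ "[u]"]) (simp add: adj2)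
      qed
    qed
  qed
qed

lemma vals1: assumes "n \<ge> 7" "1 \<le> k" "k \<le> n" shows
  "psi {..<n} (T1 n) k = (if k = 1 then n else if k \<le> 3 then 2 else if k \<le> 5 then 1 else 0)"
proof (rule seq_values[OF assms(1) _ _ _ _ _ _ _ _ _ assms(2,3)])
  show "\<And>u v. adj (T1 n) u v \<Longrightarrow> u = 0 \<or> u = 2 \<or> v = 0 \<or> v = 2"
    unfolding adj1 by (elim disjE conjE; simp)
  show "\<And>u v. adj (T1 n) u v \<Longrightarrow> u \<noteq> 1 \<Longrightarrow> v \<noteq> 1 \<Longrightarrow> ((u = 0 \<or> u = 2) \<longleftrightarrow> \<not>(v = 0 \<or> v = 2))"
    unfolding adj1 by (elim disjE conjE; simp)
  show "\<And>u w y. adj (T1 n) u y \<Longrightarrow> adj (T1 n) w y \<Longrightarrow> (u = 0 \<or> u = 2) \<Longrightarrow> (w = 0 \<or> w = 2) \<Longrightarrow> y \<noteq> 1 \<Longrightarrow> u = w"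
    unfolding adj1 by (elim disjE conjE; simp)
  show "\<And>v. adj (T1 n) 1 v \<Longrightarrow> v = 0 \<or> v = 2"
    unfolding adj1 by (elim disjE conjE; simp)
  show "adj (T1 n) 0 1" "adj (T1 n) 1 2" "adj (T1 n) 2 3" "adj (T1 n) 0 5" "adj (T1 n) 0 6"
    using assms(1) by (simp_all add: adj1)
qed

lemma vals2: assumes "n \<ge> 7" "1 \<le> k" "k \<le> n" shows
  "psi {..<n} (T2 n) k = (if k = 1 then n else if k \<le> 3 then 2 else if k \<le> 5 then 1 else 0)"
proof (rule seq_values[OF assms(1) _ _ _ _ _ _ _ _ _ assms(2,3)])
  show "\<And>u v. adj (T2 n) u v \<Longrightarrow> u = 0 \<or> u = 2 \<or> v = 0 \<or> v = 2"
    unfolding adj2 by (elim disjE conjE; simp)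
  show "\<And>u v. adj (T2 n) u v \<Longrightarrow> u \<noteq> 1 \<Longrightarrow> v \<noteq> 1 \<Longrightarrow> ((u = 0 \<or> u = 2) \<longleftrightarrow> \<not>(v = 0 \<or> v = 2))"
    unfolding adj2 by (elim disjE conjE; simp)
  show "\<And>u w y. adj (T2 n) u y \<Longrightarrow> adj (T2 n) w y \<Longrightarrow> (u = 0 \<or> u = 2) \<Longrightarrow> (w = 0 \<or> w = 2) \<Longrightarrow> y \<noteq> 1 \<Longrightarrow> u = w"
    unfolding adj2 by (elim disjE conjE; simp)
  show "\<And>v. adj (T2 n) 1 v \<Longrightarrow> v = 0 \<or> v = 2"
    unfolding adj2 by (elim disjE conjE; simp)
  show "adj (T2 n) 0 1" "adj (T2 n) 1 2" "adj (T2 n) 2 3" "adj (T2 n) 0 5" "adj (T2 n) 0 6"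
    using assms(1) by (simp_all add: adj2)
qed

lemma noniso: assumes n7: "n \<ge> 7" shows "\<not> graph_iso {..<n} (T1 n) {..<n} (T2 n)"
proof
  assume "graph_iso {..<n} (T1 n) {..<n} (T2 n)"
  then obtain f where bij: "bij_betw f {..<n} {..<n}"
    and pres: "\<forall>u\<in>{..<n}. \<forall>v\<in>{..<n}. adj (T1 n) u v \<longleftrightarrow> adj (T2 n) (f u) (f v)"
    unfolding graph_iso_def by blast
  define N1 where "N1 = {v \<in> {..<n}. adj (T1 n) 0 v}"
  have N1: "N1 = insert 1 {4..<n}" unfolding N1_def using n7 by (auto simp: adj1)
  have cN1: "card N1 = n - 3" unfolding N1 using n7 by simp
  have z: "(0::nat) \<in> {..<n}" using n7 by simp
  have img: "f ` N1 = {w \<in> {..<n}. adj (T2 n) (f 0) w}"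
  proof
    show "f ` N1 \<subseteq> {w \<in> {..<n}. adj (T2 n) (f 0) w}"
      using pres z bij_betw_apply[OF bij] unfolding N1_def by auto
    show "{w \<in> {..<n}. adj (T2 n) (f 0) w} \<subseteq> f ` N1"
    proof
      fix w assume w: "w \<in> {w \<in> {..<n}. adj (T2 n) (f 0) w}"
      then obtain v where v: "v \<in> {..<n}" "w = f v" using bij_betw_imp_surj_on[OF bij] by blast
      hence "adj (T1 n) 0 v" using pres z w by auto
      thus "w \<in> f ` N1" using v unfolding N1_def by auto
    qed
  qed
  have "card (f ` N1) = card N1"
    by (rule card_image) (rule inj_on_subset[OF bij_betw_imp_inj_on[OF bij]], auto simp: N1_def)
  hence eq: "card {w \<in> {..<n}. adj (T2 n) (f 0) w} = n - 3" using img cN1 by simp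
  have "card {w \<in> {..<n}. adj (T2 n) x w} \<le> n - 4" for x
  proof -
    consider "x = 0" | "x = 1" | "x = 2" | "x \<noteq> 0 \<and> x \<noteq> 1 \<and> x \<noteq> 2" by blast
    thus ?thesis
    proof cases
      case 1
      have "{w \<in> {..<n}. adj (T2 n) x w} \<subseteq> insert 1 {5..<n}" using 1 by (auto simp: adj2)
      hence "card {w \<in> {..<n}. adj (T2 n) x w} \<le> card (insert 1 {5..<n})" by (rule card_mono[rotated]) simp
      also have "\<dots> = n - 4" using n7 by simp
      finally show ?thesis .
    next
      case 2
      have "{w \<in> {..<n}. adj (T2 n) x w} \<subseteq> {0,2}" using 2 by (auto simp: adj2)
      hence "card {w \<in> {..<n}. adj (T2 n) x w} \<le> card {0::nat,2}" by (rule card_mono[rotated]) simp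
      thus ?thesis using n7 by simp
    next
      case 3
      have "{w \<in> {..<n}. adj (T2 n) x w} \<subseteq> {1,3,4}" using 3 by (auto simp: adj2)
      hence "card {w \<in> {..<n}. adj (T2 n) x w} \<le> card {1::nat,3,4}" by (rule card_mono[rotated]) simp
      thus ?thesis using n7 by simp
    next
      case 4
      have "{w \<in> {..<n}. adj (T2 n) x w} \<subseteq> {0,2}" using 4 by (auto simp: adj2)
      hence "card {w \<in> {..<n}. adj (T2 n) x w} \<le> card {0::nat,2}" by (rule card_mono[rotated]) simp
      thus ?thesis using n7 by simp
    qed
  qed
  from this[of "f 0"] eq n7 show False by simp
qed

theorem mainTheorem8:
  fixes n :: nat
  assumes "n \<ge> 7"
  shows "\<exists>E1 E2 :: nat set set.
           is_tree {..<n} E1 \<and> is_tree {..<n} E2 \<and>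
           path_sequence {..<n} E1 = path_sequence {..<n} E2 \<and>
           \<not> graph_iso {..<n} E1 {..<n} E2"
proof (intro exI conjI)
  show "is_tree {..<n} (T1 n)" using tree1[OF assms] .
  show "is_tree {..<n} (T2 n)" using tree2[OF assms] .
  show "\<not> graph_iso {..<n} (T1 n) {..<n} (T2 n)" using noniso[OF assms] .
  show "path_sequence {..<n} (T1 n) = path_sequence {..<n} (T2 n)"
    unfolding path_sequence_def
  proof (rule map_cong)
    fix k assume "k \<in> set [1..<card {..<n} + 1]"
    hence k: "1 \<le> k" "k \<le> n" by auto
    show "psi {..<n} (T1 n) k = psi {..<n} (T2 n) k" using vals1[OF assms k] vals2[OF assms k] by simp
  qed simp
qed

end
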